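(* Let $L$ be a complete finite-dimensional Lie algebra over any field. Then there exists a Lie algebra $H$ with $H^2\cong L$ if and only if $L$ is perfect, i.e. $L^2=L$.
   Context: A Lie algebra $L$ is complete if $Z(L)=0$ and every derivation of $L$ is inner, i.e. $\mathrm{Der}(L)=\mathrm{ad}(L)$. $H^2=[H,H]$ denotes the derived algebra. *)

theory Defs
  imports Main "HOL.Vector_Spaces"
begin

text \<open>A Lie algebra over a field 'k: the whole type 'v is the underlying vector space,
  with scalar multiplication s and bracket b.\<close>

definition lie_algebra :: "('k::field \<Rightarrow> 'v::ab_group_add \<Rightarrow> 'v) \<Rightarrow> ('v \<Rightarrow> 'v \<Rightarrow> 'v) \<Rightarrow> bool" where
  "lie_algebra s b \<longleftrightarrow> vector_space s
     \<and> (\<forall>x y z. b (x + y) z = b x z + b y z)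
     \<and> (\<forall>x y z. b x (y + z) = b x y + b x z)
     \<and> (\<forall>a x y. b (s a x) y = s a (b x y))
     \<and> (\<forall>a x y. b x (s a y) = s a (b x y))
     \<and> (\<forall>x. b x x = 0)
     \<and> (\<forall>x y z. b x (b y z) + b y (b z x) + b z (b x y) = 0)"

definition fin_dim :: "('k::field \<Rightarrow> 'v::ab_group_add \<Rightarrow> 'v) \<Rightarrow> bool" where
  "fin_dim s \<longleftrightarrow> (\<exists>B. finite B \<and> module.span s B = UNIV)"

definition derived :: "('k::field \<Rightarrow> 'v::ab_group_add \<Rightarrow> 'v) \<Rightarrow> ('v \<Rightarrow> 'v \<Rightarrow> 'v) \<Rightarrow> 'v set" where
  "derived s b = module.span s {b x y | x y. True}"

definition perfect :: "('k::field \<Rightarrow> 'v::ab_group_add \<Rightarrow> 'v) \<Rightarrow> ('v \<Rightarrow> 'v \<Rightarrow> 'v) \<Rightarrow> bool" where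
  "perfect s b \<longleftrightarrow> derived s b = UNIV"

definition lie_center :: "('v \<Rightarrow> 'v \<Rightarrow> 'v::ab_group_add) \<Rightarrow> 'v set" where
  "lie_center b = {z. \<forall>x. b z x = 0}"

definition derivation :: "('k::field \<Rightarrow> 'v::ab_group_add \<Rightarrow> 'v) \<Rightarrow> ('v \<Rightarrow> 'v \<Rightarrow> 'v) \<Rightarrow> ('v \<Rightarrow> 'v) \<Rightarrow> bool" where
  "derivation s b D \<longleftrightarrow> module_hom s s D \<and> (\<forall>x y. D (b x y) = b (D x) y + b x (D y))"

definition complete_lie :: "('k::field \<Rightarrow> 'v::ab_group_add \<Rightarrow> 'v) \<Rightarrow> ('v \<Rightarrow> 'v \<Rightarrow> 'v) \<Rightarrow> bool" where
  "complete_lie s b \<longleftrightarrow> lie_center b = {0} \<and> (\<forall>D. derivation s b D \<longrightarrow> (\<exists>a. D = b a))"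

definition derived_iso ::
  "('k::field \<Rightarrow> 'h::ab_group_add \<Rightarrow> 'h) \<Rightarrow> ('h \<Rightarrow> 'h \<Rightarrow> 'h) \<Rightarrow>
   ('k \<Rightarrow> 'v::ab_group_add \<Rightarrow> 'v) \<Rightarrow> ('v \<Rightarrow> 'v \<Rightarrow> 'v) \<Rightarrow> bool" where
  "derived_iso sH bH sL bL \<longleftrightarrow> (\<exists>f. bij_betw f (derived sH bH) UNIV
     \<and> (\<forall>x\<in>derived sH bH. \<forall>y\<in>derived sH bH. f (x + y) = f x + f y)
     \<and> (\<forall>a. \<forall>x\<in>derived sH bH. f (sH a x) = sL a (f x))
     \<and> (\<forall>x\<in>derived sH bH. \<forall>y\<in>derived sH bH. f (bH x y) = bL (f x) (f y)))"

end

theory Submission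
  imports Defs
begin

lemma lie_vs: "lie_algebra s b \<Longrightarrow> vector_space s"
  by (simp add: lie_algebra_def)

lemma lie_add_l: "lie_algebra s b \<Longrightarrow> b (x + y) z = b x z + b y z"
  by (simp add: lie_algebra_def)
lemma lie_add_r: "lie_algebra s b \<Longrightarrow> b x (y + z) = b x y + b x z"
  by (simp add: lie_algebra_def)
lemma lie_scale_l: "lie_algebra s b \<Longrightarrow> b (s a x) y = s a (b x y)"
  by (simp add: lie_algebra_def)
lemma lie_scale_r: "lie_algebra s b \<Longrightarrow> b x (s a y) = s a (b x y)"
  by (simp add: lie_algebra_def)
lemma lie_jac: "lie_algebra s b \<Longrightarrow> b x (b y z) + b y (b z x) + b z (b x y) = 0"
  by (simp add: lie_algebra_def)
lemma lie_alt: "lie_algebra s b \<Longrightarrow> b x x = 0"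
  by (simp add: lie_algebra_def)

lemma lie_zero_l: "lie_algebra s b \<Longrightarrow> b 0 y = 0"
  using lie_add_l[of s b 0 0 y] by simp
lemma lie_zero_r: "lie_algebra s b \<Longrightarrow> b x 0 = 0"
  using lie_add_r[of s b x 0 0] by simp
lemma lie_anti: "lie_algebra s b \<Longrightarrow> b y x = - b x y"
proof -
  assume L: "lie_algebra s b"
  have "0 = b (x + y) (x + y)" using lie_alt[OF L] by simp
  also have "\<dots> = b x x + b x y + (b y x + b y y)"
    by (simp add: lie_add_l[OF L] lie_add_r[OF L] add.assoc)
  also have "\<dots> = b x y + b y x" by (simp add: lie_alt[OF L])
  finally have h: "b y x + b x y = 0" by (simp add: add.commute)
  show ?thesis using h by (rule add_eq_0_iff2[THEN iffD1, rotated] | simp add: eq_neg_iff_add_eq_0)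
qed
lemma lie_diff_l: "lie_algebra s b \<Longrightarrow> b (x - y) z = b x z - b y z"
proof -
  assume L: "lie_algebra s b"
  have "b x z = b (x - y) z + b y z" using lie_add_l[OF L, of "x - y" y z] by simp
  then show ?thesis by (simp add: algebra_simps)
qed
lemma lie_deriv: "lie_algebra s b \<Longrightarrow> b h (b u v) = b (b h u) v + b u (b h v)"
proof -
  assume L: "lie_algebra s b"
  have j: "b h (b u v) + b u (b v h) + b v (b h u) = 0" by (rule lie_jac[OF L])
  have "b v h = - b h v" by (rule lie_anti[OF L])
  moreover have "b u (- w) = - b u w" for w
    using lie_add_r[OF L, of u w "- w"] lie_zero_r[OF L, of u] by (simp add: eq_neg_iff_add_eq_0 add.commute)
  ultimately have 1: "b u (b v h) = - b u (b h v)" by simp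
  have 2: "b v (b h u) = - b (b h u) v" by (rule lie_anti[OF L])
  from j show ?thesis unfolding 1 2 by (simp add: algebra_simps eq_neg_iff_add_eq_0)
qed

theorem corollary2p2:
  fixes sL :: "'k::field \<Rightarrow> 'v::ab_group_add \<Rightarrow> 'v" and bL :: "'v \<Rightarrow> 'v \<Rightarrow> 'v"
  assumes "lie_algebra sL bL" and "fin_dim sL" and "complete_lie sL bL"
  shows "(\<forall>(sH :: 'k \<Rightarrow> 'h::ab_group_add \<Rightarrow> 'h) bH.
            lie_algebra sH bH \<and> derived_iso sH bH sL bL \<longrightarrow> perfect sL bL)
       \<and> (perfect sL bL \<longrightarrow>
            (\<exists>(sH :: 'k \<Rightarrow> 'v \<Rightarrow> 'v) bH. lie_algebra sH bH \<and> derived_iso sH bH sL bL))"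
proof (intro conjI allI impI)
  note LL = assms(1)
  interpret L: vector_space sL using lie_vs[OF LL] .
  {
    assume "perfect sL bL"
    then have "derived sL bL = UNIV" by (simp add: perfect_def)
    then have "derived_iso sL bL sL bL"
      unfolding derived_iso_def by (intro exI[of _ id]) auto
    then show "\<exists>(sH :: 'k \<Rightarrow> 'v \<Rightarrow> 'v) bH. lie_algebra sH bH \<and> derived_iso sH bH sL bL"
      using LL by blast
  }
  fix sH :: "'k \<Rightarrow> 'h::ab_group_add \<Rightarrow> 'h" and bH
  assume "lie_algebra sH bH \<and> derived_iso sH bH sL bL"
  then have LH: "lie_algebra sH bH" and iso: "derived_iso sH bH sL bL" by auto
  interpret H: vector_space sH using lie_vs[OF LH] .
  define I where "I = derived sH bH"
  obtain f where bij: "bij_betw f I UNIV"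
    and fadd: "\<And>x y. x \<in> I \<Longrightarrow> y \<in> I \<Longrightarrow> f (x + y) = f x + f y"
    and fsc: "\<And>a x. x \<in> I \<Longrightarrow> f (sH a x) = sL a (f x)"
    and fbr: "\<And>x y. x \<in> I \<Longrightarrow> y \<in> I \<Longrightarrow> f (bH x y) = bL (f x) (f y)"
    using iso unfolding derived_iso_def I_def by blast
  have I_span: "I = H.span {bH x y | x y. True}" by (simp add: I_def derived_def)
  have brI: "bH x y \<in> I" for x y unfolding I_span by (rule H.span_base) blast
  have I0: "0 \<in> I" unfolding I_span by (rule H.span_zero)
  have Iadd: "x \<in> I \<Longrightarrow> y \<in> I \<Longrightarrow> x + y \<in> I" for x y unfolding I_span by (rule H.span_add)
  have Isc: "x \<in> I \<Longrightarrow> sH a x \<in> I" for a x unfolding I_span by (rule H.span_scale)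
  have finj: "inj_on f I" using bij by (rule bij_betw_imp_inj_on)
  have f0: "f 0 = 0" using fadd[OF I0 I0] by simp
  define g where "g = inv_into I f"
  have gI: "g z \<in> I" for z unfolding g_def using bij
    by (metis UNIV_I bij_betw_def inv_into_into)
  have fg: "f (g z) = z" for z unfolding g_def using bij
    by (metis UNIV_I bij_betw_inv_into_right)
  have gf: "w \<in> I \<Longrightarrow> g (f w) = w" for w unfolding g_def using finj by (rule inv_into_f_f)
  have feq: "x \<in> I \<Longrightarrow> y \<in> I \<Longrightarrow> f x = f y \<Longrightarrow> x = y" for x y using finj by (meson inj_onD)
  have gadd: "g (x + y) = g x + g y" for x y
    by (rule feq) (auto simp: gI Iadd fadd fg)
  have gsc: "g (sL a x) = sH a (g x)" for a x
    by (rule feq) (auto simp: gI Isc fsc fg)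
  have gbr: "g (bL x y) = bH (g x) (g y)" for x y
    by (rule feq) (auto simp: gI brI fbr fg)
  have key: "\<exists>c\<in>I. \<forall>u\<in>I. bH h u = bH c u" for h
  proof -
    define D where "D = (\<lambda>y. f (bH h (g y)))"
    have "derivation sL bL D"
      unfolding derivation_def module_hom_iff
    proof (intro conjI allI)
      show "module sL" "module sL" using lie_vs[OF LL] by (simp_all add: module_iff_vector_space)
      show "D (x + y) = D x + D y" for x y
        unfolding D_def by (simp add: gadd lie_add_r[OF LH] fadd brI)
      show "D (sL c x) = sL c (D x)" for c x
        unfolding D_def by (simp add: gsc lie_scale_r[OF LH] fsc brI)
      show "D (bL x y) = bL (D x) y + bL x (D y)" for x y
      proof -
        have "D (bL x y) = f (bH h (bH (g x) (g y)))" by (simp add: D_def gbr)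
        also have "\<dots> = f (bH (bH h (g x)) (g y) + bH (g x) (bH h (g y)))"
          by (rule arg_cong[where f=f], rule lie_deriv[OF LH])
        also have "\<dots> = f (bH (bH h (g x)) (g y)) + f (bH (g x) (bH h (g y)))"
          by (rule fadd[OF brI brI])
        also have "\<dots> = bL (D x) y + bL x (D y)" by (simp add: fbr brI gI fg D_def)
        finally show ?thesis .
      qed
    qed
    then obtain a where Da: "D = bL a" using assms(3) unfolding complete_lie_def by blast
    show ?thesis
    proof (intro bexI ballI)
      show "g a \<in> I" by (rule gI)
      fix u assume u: "u \<in> I"
      have "f (bH h u) = D (f u)" unfolding D_def using gf[OF u] by simp
      also have "\<dots> = f (bH (g a) u)" using Da fbr[OF gI u] fg by simp
      finally show "bH h u = bH (g a) u" by (rule feq[OF brI brI])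
    qed
  qed
  have cent: "t = 0" if t: "t \<in> I" and tu: "\<forall>u\<in>I. bH t u = 0" for t
  proof -
    have "bL (f t) z = 0" for z
    proof -
      have "bL (f t) z = bL (f t) (f (g z))" by (simp add: fg)
      also have "\<dots> = f (bH t (g z))" using fbr[OF t gI] by simp
      also have "\<dots> = 0" using tu gI f0 by simp
      finally show ?thesis .
    qed
    then have "f t \<in> lie_center bL" by (simp add: lie_center_def)
    then have "f t = f 0" using assms(3) f0 by (simp add: complete_lie_def)
    then show ?thesis by (rule feq[OF t I0])
  qed
  have brc: "\<exists>c1\<in>I. \<exists>c2\<in>I. bH x y = bH c1 c2" for x y
  proof -
    obtain c1 where c1: "c1 \<in> I" "\<forall>u\<in>I. bH x u = bH c1 u" using key by blast
    obtain c2 where c2: "c2 \<in> I" "\<forall>u\<in>I. bH y u = bH c2 u" using key by blast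
    define x' where "x' = x - c1"
    define y' where "y' = y - c2"
    have x'u: "bH x' u = 0" if "u \<in> I" for u
      unfolding x'_def using c1 that by (simp add: lie_diff_l[OF LH])
    have y'u: "bH y' u = 0" if "u \<in> I" for u
      unfolding y'_def using c2 that by (simp add: lie_diff_l[OF LH])
    have t0: "bH x' y' = 0"
    proof (rule cent[OF brI], intro ballI)
      fix u assume u: "u \<in> I"
      have "bH x' (bH y' u) + bH y' (bH u x') + bH u (bH x' y') = 0" by (rule lie_jac[OF LH])
      moreover have "bH y' u = 0" using y'u[OF u] .
      moreover have "bH u x' = 0" using x'u[OF u] lie_anti[OF LH, of x' u] by simp
      ultimately have "bH u (bH x' y') = 0" by (simp add: lie_zero_r[OF LH])
      then show "bH (bH x' y') u = 0" using lie_anti[OF LH, of u "bH x' y'"] by simp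
    qed
    have xs: "x = c1 + x'" and ys: "y = c2 + y'" by (simp_all add: x'_def y'_def)
    have "bH x y = bH c1 c2 + bH c1 y' + (bH x' c2 + bH x' y')"
      unfolding xs ys by (simp add: lie_add_l[OF LH] lie_add_r[OF LH])
    also have "bH c1 y' = 0" using y'u[OF c1(1)] lie_anti[OF LH, of y' c1] by simp
    also have "bH x' c2 = 0" using x'u[OF c2(1)] .
    finally have "bH x y = bH c1 c2" using t0 by simp
    then show ?thesis using c1 c2 by blast
  qed
  have main: "w \<in> I \<and> f w \<in> derived sL bL" if "w \<in> H.span {bH x y | x y. True}" for w
    using that
  proof (induction rule: H.span_induct_alt)
    case base
    then show ?case using I0 f0 by (simp add: derived_def L.span_zero)
  next
    case (step c x y)
    then obtain p q where xpq: "x = bH p q" by blast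
    obtain c1 c2 where c: "c1 \<in> I" "c2 \<in> I" "bH p q = bH c1 c2" using brc by blast
    have xI: "x \<in> I" using xpq brI by simp
    have "f x = bL (f c1) (f c2)" using xpq c fbr by simp
    then have "f x \<in> derived sL bL" unfolding derived_def by (intro L.span_base) blast
    then have "f (sH c x + y) \<in> derived sL bL"
      using step xI by (simp add: fadd Isc fsc derived_def L.span_add L.span_scale)
    then show ?case using step xI by (simp add: Iadd Isc)
  qed
  have "z \<in> derived sL bL" for z
    using main[of "g z"] gI[of z] fg[of z] I_span by simp
  then show "perfect sL bL" by (auto simp: perfect_def)
qed

end
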